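(* Let $S$ be an additively cancellative centrally essential semiring without non-zero zero-divisors, and let $D(S)$ be its ring of differences. If the ring $D(S)$ has no non-zero zero-divisors, then $S$ is commutative.
   Context: A semiring is a set $S$ with two binary operations $+$ and $\cdot$ such that $(S,+)$ is a commutative monoid with neutral element $0$, $(S,\cdot)$ is a monoid with identity $1$, multiplication distributes over addition on both sides, and $0s=s0=0$ for all $s\in S$. The center is $C(S)=\{s\in S: ss'=s's \text{ for all } s'\in S\}$. $S$ is centrally essential if for every non-zero $x\in S$ there exist non-zero $y,z\in C(S)$ with $xy=z$. $S$ is additively cancellative if $x+z=y+z$ implies $x=y$; such $S$ embeds as a subsemiring in a ring $D(S)$ (ring of differences) in which every element is $x-y$ with $x,y\in S$. An element $a$ is a zero-divisor if $ab=0$ or $ba=0$ for some non-zero $b$. *)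

theory Defs
  imports Main
begin

text \<open>Semirings in the sense of the paper: commutative additive monoid, multiplicative
monoid, two-sided distributivity, absorbing zero. In Isabelle this is the type class
combination semiring_0 + monoid_mult (we avoid semiring_1, which would force 0 \<noteq> 1).\<close>

definition center :: "'a::{semiring_0,monoid_mult} set" where
  "center = {s. \<forall>s'. s * s' = s' * s}"

definition centrally_essential :: "'a::{semiring_0,monoid_mult} itself \<Rightarrow> bool" where
  "centrally_essential _ \<longleftrightarrow>
     (\<forall>x::'a. x \<noteq> 0 \<longrightarrow> (\<exists>y z. y \<in> center \<and> z \<in> center \<and> y \<noteq> 0 \<and> z \<noteq> 0 \<and> x * y = z))"

definition add_cancellative :: "'a::{semiring_0,monoid_mult} itself \<Rightarrow> bool" where
  "add_cancellative _ \<longleftrightarrow> (\<forall>x y z::'a. x + z = y + z \<longrightarrow> x = y)"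

definition zero_divisor :: "'a::{times,zero} \<Rightarrow> bool" where
  "zero_divisor a \<longleftrightarrow> (\<exists>b. b \<noteq> 0 \<and> (a * b = 0 \<or> b * a = 0))"

definition no_nonzero_zero_divisors :: "'a::{times,zero} itself \<Rightarrow> bool" where
  "no_nonzero_zero_divisors _ \<longleftrightarrow> (\<forall>a::'a. a \<noteq> 0 \<longrightarrow> \<not> zero_divisor a)"

definition ring_of_differences ::
  "('a::{semiring_0,monoid_mult} \<Rightarrow> 'b::{ring,monoid_mult}) \<Rightarrow> bool" where
  "ring_of_differences f \<longleftrightarrow>
     inj f \<and> f 0 = 0 \<and> f 1 = 1 \<and>
     (\<forall>x y. f (x + y) = f x + f y) \<and> (\<forall>x y. f (x * y) = f x * f y) \<and>
     (\<forall>r. \<exists>x y. r = f x - f y)"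

end

theory Submission
  imports Defs
begin

theorem proposition2p8:
  fixes f :: "'a::{semiring_0,monoid_mult} \<Rightarrow> 'b::{ring,monoid_mult}"
  assumes "add_cancellative TYPE('a)"
    and "centrally_essential TYPE('a)"
    and "no_nonzero_zero_divisors TYPE('a)"
    and "ring_of_differences f"
    and "no_nonzero_zero_divisors TYPE('b)"
  shows "\<forall>x y :: 'a. x * y = y * x"
proof (intro allI)
  fix x s :: 'a
  show "x * s = s * x"
  proof (cases "x = 0")
    case True then show ?thesis by simp
  next
    case False
    then obtain y z where y: "y \<in> center" and z: "z \<in> center" and "y \<noteq> 0" "z \<noteq> 0"
      and xy: "x * y = z"
      using assms(2) unfolding centrally_essential_def by blast
    have inj: "inj f" and f0: "f 0 = 0" and fm: "\<And>a b. f (a * b) = f a * f b"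
      using assms(4) unfolding ring_of_differences_def by auto
    have fy: "f y \<noteq> 0" using \<open>y \<noteq> 0\<close> inj f0 by (metis injD)
    have "x * s * y = s * x * y"
    proof -
      have "x * s * y = x * (y * s)" using y unfolding center_def by (simp add: mult.assoc)
      also have "\<dots> = z * s" using xy by (metis mult.assoc)
      also have "\<dots> = s * z" using z unfolding center_def by simp
      also have "\<dots> = s * x * y" using xy by (metis mult.assoc)
      finally show ?thesis .
    qed
    then have "f (x * s) * f y = f (s * x) * f y" by (simp add: fm[symmetric])
    then have eq: "(f (x * s) - f (s * x)) * f y = 0" by (simp add: algebra_simps)
    have "f (x * s) - f (s * x) = 0"
    proof (rule ccontr)
      assume "f (x * s) - f (s * x) \<noteq> 0"
      then have "\<not> zero_divisor (f (x * s) - f (s * x))"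
        using assms(5) unfolding no_nonzero_zero_divisors_def by blast
      then show False using eq fy unfolding zero_divisor_def by blast
    qed
    then have "f (x * s) = f (s * x)" by simp
    then show ?thesis using inj by (simp add: inj_eq)
  qed
qed

end
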